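(* Let $\mathbb{F}_r$ be the free group on $r$ free generators, $r\in\mathbb{N}\cup\{\infty\}$, $r\ge1$. Then: (1) the function $g\mapsto\|g\|_2^2$ is conditionally negative definite on $\mathbb{F}_r$; equivalently, for every $s\in[0,1]$ the function $g\mapsto s^{\|g\|_2^2}$ is positive definite on $\mathbb{F}_r$; (2) the function $g\mapsto(-1)^{\|g\|_2^2}$ is positive definite on $\mathbb{F}_r$. Consequently, for every $s\in[-1,1]$ the function $g\mapsto s^{\|g\|_2^2}$ (with the convention $0^0=1$) is positive definite on $\mathbb{F}_r$.
   Context: Every $g\ne e$ in $\mathbb{F}_r$ has a unique reduced form $g = a_1^{k_1}\cdots a_n^{k_n}$ with $a_j$ free generators, $a_j\neq a_{j+1}$, $k_j\in\mathbb{Z}\setminus\{0\}$; $\|g\|_2^2 := \sum_{j=1}^n k_j^2$ and $\|e\|_2=0$. A function $\varphi$ on a group is positive definite if $\sum_{j,k=1}^n c_j\overline{c_k}\varphi(x_j^{-1}x_k)\ge0$ for all $n$, $x_i$ in the group, $c_i\in\mathbb{C}$; a function $\psi$ is conditionally negative definite if $\psi(g^{-1})=\overline{\psi(g)}$ and $\sum_{j,k} c_j\overline{c_k}\psi(x_j^{-1}x_k)\le0$ whenever $\sum_j c_j=0$. *)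

theory Defs
  imports Complex_Main "HOL-Library.Complex_Order" "HOL-Library.Countable"
begin

text \<open>Elements of the free group on generators of type 'a are represented by their
reduced words a_1^k_1 ... a_n^k_n, encoded as lists of pairs (a_j, k_j) with
k_j nonzero and consecutive generators distinct.\<close>

type_synonym 'a fg = "('a \<times> int) list"

fun fg_reduced :: "'a fg \<Rightarrow> bool" where
  "fg_reduced [] = True"
| "fg_reduced [(a, k)] = (k \<noteq> 0)"
| "fg_reduced ((a, k) # (b, m) # w) = (k \<noteq> 0 \<and> a \<noteq> b \<and> fg_reduced ((b, m) # w))"

fun fg_cons :: "'a \<times> int \<Rightarrow> 'a fg \<Rightarrow> 'a fg" where
  "fg_cons (a, k) [] = (if k = 0 then [] else [(a, k)])"
| "fg_cons (a, k) ((b, m) # w) =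
     (if k = 0 then (b, m) # w
      else if a = b then (if k + m = 0 then w else (a, k + m) # w)
      else (a, k) # (b, m) # w)"

definition fg_mult :: "'a fg \<Rightarrow> 'a fg \<Rightarrow> 'a fg" where
  "fg_mult u v = foldr fg_cons u v"

definition fg_inv :: "'a fg \<Rightarrow> 'a fg" where
  "fg_inv u = rev (map (\<lambda>(a, k). (a, - k)) u)"

definition fg_norm2 :: "'a fg \<Rightarrow> nat" where
  "fg_norm2 u = sum_list (map (\<lambda>(a, k). nat (k ^ 2)) u)"

definition fg_pos_def :: "('a fg \<Rightarrow> complex) \<Rightarrow> bool" where
  "fg_pos_def \<phi> \<longleftrightarrow>
     (\<forall>(n::nat) (x::nat \<Rightarrow> 'a fg) (c::nat \<Rightarrow> complex).
        (\<forall>i<n. fg_reduced (x i)) \<longrightarrow>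
        0 \<le> (\<Sum>j<n. \<Sum>k<n. c j * cnj (c k) * \<phi> (fg_mult (fg_inv (x j)) (x k))))"

definition fg_cond_neg_def :: "('a fg \<Rightarrow> complex) \<Rightarrow> bool" where
  "fg_cond_neg_def \<psi> \<longleftrightarrow>
     (\<forall>g. fg_reduced g \<longrightarrow> \<psi> (fg_inv g) = cnj (\<psi> g)) \<and>
     (\<forall>(n::nat) (x::nat \<Rightarrow> 'a fg) (c::nat \<Rightarrow> complex).
        (\<forall>i<n. fg_reduced (x i)) \<longrightarrow> (\<Sum>j<n. c j) = 0 \<longrightarrow>
        (\<Sum>j<n. \<Sum>k<n. c j * cnj (c k) * \<psi> (fg_mult (fg_inv (x j)) (x k))) \<le> 0)"

end

theory Submission imports Defs begin

lemma red_tl: "fg_reduced (s # w) \<Longrightarrow> fg_reduced w"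
  by (cases s; cases w) auto

lemma cons_red: "fg_reduced (s # w) \<Longrightarrow> fg_cons s w = s # w"
  by (cases s; cases w) auto

lemma mult_red: "fg_reduced (u @ v) \<Longrightarrow> fg_mult u v = u @ v"
proof (induction u)
  case Nil then show ?case by (simp add: fg_mult_def)
next
  case (Cons s u)
  have "fg_reduced (u @ v)" using Cons.prems red_tl[of s "u@v"] by simp
  then have "fg_mult u v = u @ v" using Cons.IH by blast
  then show ?case using Cons.prems cons_red by (simp add: fg_mult_def)
qed

lemma inv_cons: "fg_inv ((a,k) # x) = fg_inv x @ [(a, -k)]"
  by (simp add: fg_inv_def)

lemma mult_inv_cons: "fg_mult (fg_inv ((a,k) # x)) y = fg_mult (fg_inv x) (fg_cons (a,-k) y)"
  by (simp add: inv_cons fg_mult_def)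

lemma red_inv_app: "fg_reduced ((a,k) # x) \<Longrightarrow> fg_reduced ((a,j) # w) \<Longrightarrow> fg_reduced (fg_inv x @ (a,j) # w)"
proof (induction x arbitrary: a k j w)
  case Nil then show ?case by (simp add: fg_inv_def)
next
  case (Cons s x)
  obtain b l where s: "s = (b,l)" by fastforce
  have h1: "fg_reduced ((b,l) # x)" using Cons.prems(1) s by simp
  have "l \<noteq> 0" using h1 by (cases x) auto
  then have h2: "fg_reduced ((b,-l) # (a,j) # w)" using Cons.prems s by auto
  have "fg_reduced (fg_inv x @ (b,-l) # (a,j) # w)" using Cons.IH[OF h1 h2] .
  then show ?case using s by (simp add: inv_cons)
qed

lemma red_inv: "fg_reduced x \<Longrightarrow> fg_reduced (fg_inv x)"
proof (cases x)
  case Nil then show ?thesis by (simp add: fg_inv_def)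
next
  case (Cons s x')
  obtain a k where s: "s = (a,k)" by fastforce
  assume r: "fg_reduced x"
  then have "k \<noteq> 0" using Cons s by (cases x') auto
  then have "fg_reduced (fg_inv x' @ [(a,-k)])" using red_inv_app[of a k x' "-k" "[]"] r Cons s by simp
  then show ?thesis using Cons s by (simp add: inv_cons)
qed

lemma norm_nil[simp]: "fg_norm2 [] = 0"
  by (simp add: fg_norm2_def)
lemma norm_app: "fg_norm2 (u @ v) = fg_norm2 u + fg_norm2 v"
  by (simp add: fg_norm2_def)
lemma norm_cons: "fg_norm2 ((a,k) # v) = nat (k^2) + fg_norm2 v"
  by (simp add: fg_norm2_def)
lemma norm_inv: "fg_norm2 (fg_inv u) = fg_norm2 u"
  by (simp add: fg_norm2_def fg_inv_def rev_map[symmetric] sum_list_rev o_def case_prod_unfold)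

fun ip :: "'a fg \<Rightarrow> 'a fg \<Rightarrow> int" where
  "ip ((a,k) # x) ((b,m) # y) = (if (a,k) = (b,m) then k*k + ip x y else if a = b then k*m else 0)"
| "ip _ _ = 0"

lemma main_id:
  "fg_reduced x \<Longrightarrow> fg_reduced y \<Longrightarrow>
   int (fg_norm2 (fg_mult (fg_inv x) y)) = int (fg_norm2 x) + int (fg_norm2 y) - 2 * ip x y"
proof (induction x y rule: ip.induct)
  case (1 a k x b m y)
  have k: "k \<noteq> 0" using "1.prems"(1) by (cases x) auto
  have m: "m \<noteq> 0" using "1.prems"(2) by (cases y) auto
  have rx: "fg_reduced x" using "1.prems"(1) red_tl by blast
  have ry: "fg_reduced y" using "1.prems"(2) red_tl by blast
  show ?case
  proof (cases "(a,k) = (b,m)")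
    case True
    then have "fg_mult (fg_inv ((a,k)#x)) ((b,m)#y) = fg_mult (fg_inv x) y"
      using k by (simp add: mult_inv_cons)
    then show ?thesis using "1.IH" True rx ry by (simp add: norm_cons power2_eq_square)
  next
    case False
    show ?thesis
    proof (cases "a = b")
      case True
      with False have km: "k \<noteq> m" by simp
      have r1: "fg_reduced ((a, m - k) # y)" using "1.prems"(2) True km by (cases y) auto
      have "fg_mult (fg_inv ((a,k)#x)) ((b,m)#y) = fg_mult (fg_inv x) ((a, m-k) # y)"
        using k km True by (simp add: mult_inv_cons)
      also have "\<dots> = fg_inv x @ (a, m-k) # y"
        using mult_red red_inv_app[OF "1.prems"(1) r1] by blast
      moreover have "k*(m*2) \<le> k*k+m*m"
      proof -
        have "0 \<le> (k-m)*(k-m)" by simp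
        thus ?thesis by (simp add: algebra_simps)
      qed
      ultimately show ?thesis using True False
        by (simp add: norm_cons norm_app norm_inv power2_eq_square algebra_simps)
    next
      case False
      have r1: "fg_reduced ((a, -k) # (b,m) # y)" using "1.prems"(2) False k by simp
      have "fg_mult (fg_inv ((a,k)#x)) ((b,m)#y) = fg_mult (fg_inv x) ((a, -k) # (b,m) # y)"
        using k False by (simp add: mult_inv_cons)
      also have "\<dots> = fg_inv x @ (a, -k) # (b,m) # y"
        using mult_red red_inv_app[OF "1.prems"(1) r1] by blast
      finally show ?thesis using False
        by (simp add: norm_cons norm_app norm_inv power2_eq_square algebra_simps)
    qed
  qed
next
  case ("2_1" y)
  then show ?case by (simp add: fg_mult_def fg_inv_def fg_norm2_def)
next
  case ("2_2" v)
  then show ?case using mult_red[of "fg_inv v" "[]"] red_inv[of v] norm_inv[of v]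
    by simp
qed


definition Q :: "nat \<Rightarrow> (nat \<Rightarrow> nat \<Rightarrow> real) \<Rightarrow> (nat \<Rightarrow> complex) \<Rightarrow> complex" where
  "Q n K c = (\<Sum>j<n. \<Sum>k<n. c j * cnj (c k) * complex_of_real (K j k))"

definition psd :: "nat \<Rightarrow> (nat \<Rightarrow> nat \<Rightarrow> real) \<Rightarrow> bool" where
  "psd n K \<longleftrightarrow> (\<forall>c. 0 \<le> Q n K c)"

lemma Q_cong: "(\<And>j k. j < n \<Longrightarrow> k < n \<Longrightarrow> K j k = K' j k) \<Longrightarrow> Q n K c = Q n K' c"
  unfolding Q_def by (intro sum.cong refl) auto

lemma psd_cong: "(\<And>j k. j < n \<Longrightarrow> k < n \<Longrightarrow> K j k = K' j k) \<Longrightarrow> psd n K \<Longrightarrow> psd n K'"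
  unfolding psd_def using Q_cong by metis

lemma Q_one: "Q n (\<lambda>j k. 1) c = (\<Sum>j<n. c j) * cnj (\<Sum>k<n. c k)"
  unfolding Q_def by (simp add: sum_product)

lemma psd_one: "psd n (\<lambda>j k. 1)"
  unfolding psd_def Q_one
proof
  fix c :: "nat \<Rightarrow> complex"
  have "0 \<le> complex_of_real ((norm (\<Sum>j<n. c j))\<^sup>2)" by (simp add: less_eq_complex_def)
  then show "0 \<le> (\<Sum>j<n. c j) * cnj (\<Sum>k<n. c k)" by (simp only: complex_norm_square)
qed

lemma Q_scale: "Q n (\<lambda>j k. g j * K j k * g k) c = Q n K (\<lambda>j. c j * complex_of_real (g j))"
  unfolding Q_def by (intro sum.cong refl) (simp add: algebra_simps)

lemma psd_scale: "psd n K \<Longrightarrow> psd n (\<lambda>j k. g j * K j k * g k)"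
  unfolding psd_def Q_scale by blast

lemma Q_sum: "Q n (\<lambda>j k. \<Sum>i\<in>I. K i j k) c = (\<Sum>i\<in>I. Q n (K i) c)"
  unfolding Q_def by (simp add: sum_distrib_left sum.swap[of _ I])

lemma psd_sum: "(\<And>i. i \<in> I \<Longrightarrow> psd n (K i)) \<Longrightarrow> psd n (\<lambda>j k. \<Sum>i\<in>I. K i j k)"
  unfolding psd_def Q_sum by (simp add: sum_nonneg)

lemma Q_add: "Q n (\<lambda>j k. K j k + L j k) c = Q n K c + Q n L c"
  unfolding Q_def by (simp add: algebra_simps sum.distrib)

lemma psd_add: "psd n K \<Longrightarrow> psd n L \<Longrightarrow> psd n (\<lambda>j k. K j k + L j k)"
  unfolding psd_def Q_add by (simp add: add_nonneg_nonneg)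

lemma Q_smult: "Q n (\<lambda>j k. r * K j k) c = complex_of_real r * Q n K c"
  unfolding Q_def by (simp add: sum_distrib_left algebra_simps)

lemma psd_smult: "0 \<le> r \<Longrightarrow> psd n K \<Longrightarrow> psd n (\<lambda>j k. r * K j k)"
  unfolding psd_def Q_smult by (simp add: less_eq_complex_def)

definition fa :: "'a \<Rightarrow> 'a fg \<Rightarrow> int" where
  "fa a x = (if x \<noteq> [] \<and> fst (hd x) = a then snd (hd x) else 0)"
definition gs :: "'a \<times> int \<Rightarrow> 'a fg \<Rightarrow> int" where
  "gs s x = (if x \<noteq> [] \<and> hd x = s then 1 else 0)"

lemma ip_decomp:
  assumes "finite A" "finite S"
    "x \<noteq> [] \<Longrightarrow> fst (hd x) \<in> A \<and> hd x \<in> S" "y \<noteq> [] \<Longrightarrow> fst (hd y) \<in> A \<and> hd y \<in> S"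
  shows "ip x y = (\<Sum>a\<in>A. fa a x * fa a y) + (\<Sum>s\<in>S. gs s x * gs s y * ip (tl x) (tl y))"
proof (cases x)
  case Nil then show ?thesis by (simp add: fa_def gs_def)
next
  case (Cons p x')
  obtain a k where p: "p = (a,k)" by fastforce
  show ?thesis
  proof (cases y)
    case Nil then show ?thesis by (simp add: fa_def gs_def)
  next
    case (Cons q y')
    obtain b m where q: "q = (b,m)" by fastforce
    have A: "(\<Sum>a'\<in>A. fa a' x * fa a' y) = (if a = b then k * m else 0)"
    proof -
      have "(\<Sum>a'\<in>A. fa a' x * fa a' y) = (\<Sum>a'\<in>A. if a' = a then (if a = b then k*m else 0) else 0)"
        using Cons \<open>x = p # x'\<close> p q by (intro sum.cong refl) (auto simp: fa_def)
      also have "\<dots> = (if a = b then k * m else 0)"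
        using assms(1,3) \<open>x = p # x'\<close> p by simp
      finally show ?thesis .
    qed
    have S: "(\<Sum>s\<in>S. gs s x * gs s y * ip (tl x) (tl y)) = (if (a,k) = (b,m) then ip x' y' else 0)"
    proof -
      have "(\<Sum>s\<in>S. gs s x * gs s y * ip (tl x) (tl y)) = (\<Sum>s\<in>S. if s = (a,k) then (if (a,k) = (b,m) then ip x' y' else 0) else 0)"
        using Cons \<open>x = p # x'\<close> p q by (intro sum.cong refl) (auto simp: gs_def)
      also have "\<dots> = (if (a,k) = (b,m) then ip x' y' else 0)"
        using assms(2,3) \<open>x = p # x'\<close> p by simp
      finally show ?thesis .
    qed
    show ?thesis unfolding A S using Cons \<open>x = p # x'\<close> p q by auto
  qed
qed

lemma psd_ip_aux:
  "\<forall>x K. (\<forall>j<n. length (x j) \<le> L) \<longrightarrow> psd n K \<longrightarrow>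
     psd n (\<lambda>j k. K j k * of_int (ip (x j) (x k)))"
proof (induction L)
  case 0
  show ?case
  proof (intro allI impI)
    fix x :: "nat \<Rightarrow> 'a fg" and K
    assume "\<forall>j<n. length (x j) \<le> 0" "psd n K"
    then have "\<And>j k. j < n \<Longrightarrow> k < n \<Longrightarrow> (0::real) = K j k * of_int (ip (x j) (x k))" by auto
    moreover have "psd n (\<lambda>j k. 0)" unfolding psd_def Q_def by simp
    ultimately show "psd n (\<lambda>j k. K j k * of_int (ip (x j) (x k)))" by (rule psd_cong)
  qed
next
  case (Suc L)
  show ?case
  proof (intro allI impI)
    fix x :: "nat \<Rightarrow> 'a fg" and K
    assume len: "\<forall>j<n. length (x j) \<le> Suc L" and K: "psd n K"
    define A where "A = (\<lambda>j. fst (hd (x j))) ` {..<n}"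
    define S where "S = (\<lambda>j. hd (x j)) ` {..<n}"
    have fin: "finite A" "finite S" unfolding A_def S_def by auto
    have eq: "(\<Sum>a\<in>A. of_int (fa a (x j)) * K j k * of_int (fa a (x k))) +
            (\<Sum>s\<in>S. (of_int (gs s (x j)) * K j k * of_int (gs s (x k))) * of_int (ip (tl (x j)) (tl (x k))))
          = K j k * of_int (ip (x j) (x k))" if "j < n" "k < n" for j k
    proof -
      have "ip (x j) (x k) = (\<Sum>a\<in>A. fa a (x j) * fa a (x k)) + (\<Sum>s\<in>S. gs s (x j) * gs s (x k) * ip (tl (x j)) (tl (x k)))"
        using that by (intro ip_decomp fin) (auto simp: A_def S_def)
      then have "real_of_int (ip (x j) (x k)) = (\<Sum>a\<in>A. of_int (fa a (x j)) * of_int (fa a (x k))) + (\<Sum>s\<in>S. of_int (gs s (x j)) * of_int (gs s (x k)) * of_int (ip (tl (x j)) (tl (x k))))"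
        by simp
      then show ?thesis by (simp add: sum_distrib_left algebra_simps)
    qed
    have p1: "psd n (\<lambda>j k. \<Sum>a\<in>A. of_int (fa a (x j)) * K j k * of_int (fa a (x k)))"
      by (rule psd_sum) (rule psd_scale[OF K])
    have p2: "psd n (\<lambda>j k. \<Sum>s\<in>S. (of_int (gs s (x j)) * K j k * of_int (gs s (x k))) * of_int (ip (tl (x j)) (tl (x k))))"
    proof (intro psd_sum)
      fix s
      have l: "\<forall>j<n. length (tl (x j)) \<le> L" using len by auto
      have k: "psd n (\<lambda>j k. of_int (gs s (x j)) * K j k * of_int (gs s (x k)))"
        by (rule psd_scale[OF K])
      show "psd n (\<lambda>j k. (of_int (gs s (x j)) * K j k * of_int (gs s (x k))) * of_int (ip (tl (x j)) (tl (x k))))"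
        using spec[OF spec[OF Suc.IH, of "\<lambda>j. tl (x j)"], of "\<lambda>j k. of_int (gs s (x j)) * K j k * of_int (gs s (x k))"] l k
        by simp
    qed
    show "psd n (\<lambda>j k. K j k * of_int (ip (x j) (x k)))"
      by (rule psd_cong[OF _ psd_add[OF p1 p2]]) (rule eq)
  qed
qed

lemma psd_ip: "psd n K \<Longrightarrow> psd n (\<lambda>j k. K j k * of_int (ip (x j) (x k)))"
proof -
  assume K: "psd n K"
  define L where "L = Max ((\<lambda>j. length (x j)) ` {..<n})"
  have "\<forall>j<n. length (x j) \<le> L" unfolding L_def by auto
  then show ?thesis using psd_ip_aux K by blast
qed

lemma psd_pow: "psd n (\<lambda>j k. (of_int (ip (x j) (x k))) ^ m)"
proof (induction m)
  case 0 then show ?case using psd_one by simp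
next
  case (Suc m)
  from psd_ip[OF Suc.IH, of x] show ?case by (simp add: mult.commute)
qed

lemma sums_nonneg_complex:
  assumes "f sums s" "\<And>m. 0 \<le> (f m :: complex)"
  shows "0 \<le> s"
proof -
  have "(\<lambda>m. Re (f m)) sums Re s" "(\<lambda>m. Im (f m)) sums Im s"
    using sums_Re[OF assms(1)] sums_Im[OF assms(1)] by auto
  moreover have "\<And>m. 0 \<le> Re (f m)" "\<And>m. Im (f m) = 0" using assms(2) by (auto simp: less_eq_complex_def)
  ultimately have "0 \<le> Re s" "Im s = 0"
    using sums_le[of "\<lambda>_. 0" "\<lambda>m. Re (f m)" 0 "Re s"] sums_unique2[of "\<lambda>m. Im (f m)" "Im s" 0]
    by (auto simp: sums_zero)
  then show ?thesis by (simp add: less_eq_complex_def)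
qed

lemma psd_exp:
  assumes lam: "0 \<le> lam"
  shows "psd n (\<lambda>j k. exp (lam * of_int (ip (x j) (x k))))"
  unfolding psd_def
proof
  fix c
  let ?G = "\<lambda>j k. lam * real_of_int (ip (x j) (x k))"
  have "(\<lambda>m. \<Sum>j<n. \<Sum>k<n. c j * cnj (c k) * complex_of_real (?G j k ^ m /\<^sub>R fact m))
        sums Q n (\<lambda>j k. exp (?G j k)) c"
    unfolding Q_def
    by (intro sums_sum sums_mult sums_of_real exp_converges)
  moreover have "0 \<le> (\<Sum>j<n. \<Sum>k<n. c j * cnj (c k) * complex_of_real (?G j k ^ m /\<^sub>R fact m))" for m
  proof -
    have "psd n (\<lambda>j k. (lam ^ m / fact m) * (of_int (ip (x j) (x k))) ^ m)"
      by (intro psd_smult psd_pow) (use lam in auto)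
    then have "0 \<le> Q n (\<lambda>j k. (lam ^ m / fact m) * (of_int (ip (x j) (x k))) ^ m) c"
      unfolding psd_def by blast
    also have "Q n (\<lambda>j k. (lam ^ m / fact m) * (of_int (ip (x j) (x k))) ^ m) c =
      (\<Sum>j<n. \<Sum>k<n. c j * cnj (c k) * complex_of_real (?G j k ^ m /\<^sub>R fact m))"
      unfolding Q_def by (intro sum.cong refl) (simp add: power_mult_distrib divide_inverse algebra_simps)
    finally show ?thesis .
  qed
  ultimately show "0 \<le> Q n (\<lambda>j k. exp (lam * real_of_int (ip (x j) (x k)))) c"
    by (rule sums_nonneg_complex)
qed

lemma norm_pos: "fg_reduced w \<Longrightarrow> w \<noteq> [] \<Longrightarrow> 0 < fg_norm2 w"
proof (cases w)
  case (Cons p w')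
  obtain a k where p: "p = (a,k)" by fastforce
  assume "fg_reduced w"
  then have "k \<noteq> 0" using Cons p by (cases w') auto
  then show ?thesis using Cons p by (simp add: norm_cons)
qed simp

lemma ip_self: "ip x x = int (fg_norm2 x)"
proof (induction x)
  case (Cons p x)
  obtain a k where p: "p = (a,k)" by fastforce
  then show ?case using Cons by (simp add: norm_cons power2_eq_square)
qed (simp)

lemma ip_lt: "fg_reduced x \<Longrightarrow> fg_reduced y \<Longrightarrow> x \<noteq> y \<Longrightarrow>
   2 * ip x y < int (fg_norm2 x) + int (fg_norm2 y)"
proof (induction x y rule: ip.induct)
  case (1 a k x b m y)
  have k: "k \<noteq> 0" using "1.prems"(1) by (cases x) auto
  have rx: "fg_reduced x" using "1.prems"(1) red_tl by blast
  have ry: "fg_reduced y" using "1.prems"(2) red_tl by blast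
  show ?case
  proof (cases "(a,k) = (b,m)")
    case True
    then have "x \<noteq> y" using "1.prems"(3) by auto
    then show ?thesis using "1.IH" True rx ry by (simp add: norm_cons power2_eq_square)
  next
    case False
    show ?thesis
    proof (cases "a = b")
      case True
      with False have km: "k \<noteq> m" by simp
      have "2*k*m < k*k + m*m"
      proof -
        have "0 < (k-m)*(k-m)" using km by (auto simp: zero_less_mult_iff)
        thus ?thesis by (simp add: algebra_simps)
      qed
      then show ?thesis using True False by (simp add: norm_cons power2_eq_square)
    next
      case False
      have "0 < k * k" using k by (auto simp: zero_less_mult_iff)
      then show ?thesis using False by (simp add: norm_cons power2_eq_square add_pos_nonneg)
    qed
  qed
next
  case ("2_1" y)
  then show ?case using norm_pos[of y] by simp
next
  case ("2_2" v)
  then show ?case using norm_pos[of v] by simp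
qed

lemma psd_gauss:
  assumes s: "0 < s" "s \<le> 1" and red: "\<forall>i<n. fg_reduced (x i)"
  shows "psd n (\<lambda>j k. s ^ fg_norm2 (fg_mult (fg_inv (x j)) (x k)))"
proof -
  define l where "l = ln s"
  have l: "l \<le> 0" using s by (simp add: l_def)
  have E: "psd n (\<lambda>j k. exp ((-2*l) * of_int (ip (x j) (x k))))"
    by (rule psd_exp) (use l in simp)
  have G: "psd n (\<lambda>j k. exp (l * fg_norm2 (x j)) * exp ((-2*l) * of_int (ip (x j) (x k))) * exp (l * fg_norm2 (x k)))"
    by (rule psd_scale[OF E])
  show ?thesis
  proof (rule psd_cong[OF _ G])
    fix j k assume jk: "j < n" "k < n"
    define N where "N = fg_norm2 (fg_mult (fg_inv (x j)) (x k))"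
    have "int N = int (fg_norm2 (x j)) + int (fg_norm2 (x k)) - 2 * ip (x j) (x k)"
      unfolding N_def using main_id red jk by blast
    then have RN: "real N = real (fg_norm2 (x j)) + real (fg_norm2 (x k)) - 2 * of_int (ip (x j) (x k))"
      by (metis of_int_diff of_int_add of_int_mult of_int_of_nat_eq of_int_numeral)
    have "s ^ N = exp (real N * l)"
      using s by (simp add: exp_of_nat_mult l_def)
    also have "\<dots> = exp (l * fg_norm2 (x j)) * exp ((-2*l) * of_int (ip (x j) (x k))) * exp (l * fg_norm2 (x k))"
      unfolding RN by (simp add: exp_add[symmetric] exp_diff algebra_simps)
    finally show "exp (l * fg_norm2 (x j)) * exp ((-2*l) * of_int (ip (x j) (x k))) * exp (l * fg_norm2 (x k))
       = s ^ fg_norm2 (fg_mult (fg_inv (x j)) (x k))" unfolding N_def by simp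
  qed
qed

lemma psd_zero:
  assumes red: "\<forall>i<n. fg_reduced (x i)"
  shows "psd n (\<lambda>j k. (0::real) ^ fg_norm2 (fg_mult (fg_inv (x j)) (x k)))"
proof -
  define X where "X = x ` {..<n}"
  define ind where "ind v j = (if x j = v then 1 else (0::real))" for v j
  have G: "psd n (\<lambda>j k. \<Sum>v\<in>X. ind v j * 1 * ind v k)"
    by (rule psd_sum) (rule psd_scale[OF psd_one])
  show ?thesis
  proof (rule psd_cong[OF _ G])
    fix j k assume jk: "j < n" "k < n"
    have id: "int (fg_norm2 (fg_mult (fg_inv (x j)) (x k))) = int (fg_norm2 (x j)) + int (fg_norm2 (x k)) - 2 * ip (x j) (x k)"
      using main_id red jk by blast
    have "(\<Sum>v\<in>X. ind v j * 1 * ind v k) = (\<Sum>v\<in>X. if v = x j then (if x j = x k then 1 else 0) else 0)"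
      by (intro sum.cong refl) (auto simp: ind_def)
    also have "\<dots> = (if x j = x k then 1 else 0)"
      using jk by (simp add: X_def)
    also have "\<dots> = (0::real) ^ fg_norm2 (fg_mult (fg_inv (x j)) (x k))"
    proof (cases "x j = x k")
      case True
      then show ?thesis using id by (simp add: ip_self)
    next
      case False
      then have "2 * ip (x j) (x k) < int (fg_norm2 (x j)) + int (fg_norm2 (x k))"
        using ip_lt red jk by blast
      then have "fg_norm2 (fg_mult (fg_inv (x j)) (x k)) \<noteq> 0" using id by linarith
      then show ?thesis using False by simp
    qed
    finally show "(\<Sum>v\<in>X. ind v j * 1 * ind v k) = 0 ^ fg_norm2 (fg_mult (fg_inv (x j)) (x k))" .
  qed
qed

lemma sign_id:
  assumes "int N = int A + int B - 2 * (i::int)"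
  shows "(-1::real) ^ N = (-1) ^ A * (-1) ^ B"
proof -
  have "even N \<longleftrightarrow> even (A + B)" using assms by presburger
  then show ?thesis by (simp add: power_add[symmetric] minus_one_power_iff)
qed

lemma psd_sign:
  assumes red: "\<forall>i<n. fg_reduced (x i)" and K: "psd n K"
  shows "psd n (\<lambda>j k. (-1::real) ^ fg_norm2 (fg_mult (fg_inv (x j)) (x k)) * K j k)"
proof -
  have G: "psd n (\<lambda>j k. (-1) ^ fg_norm2 (x j) * K j k * (-1) ^ fg_norm2 (x k))"
    by (rule psd_scale[OF K])
  show ?thesis
  proof (rule psd_cong[OF _ G])
    fix j k assume jk: "j < n" "k < n"
    have "(-1::real) ^ fg_norm2 (fg_mult (fg_inv (x j)) (x k)) = (-1) ^ fg_norm2 (x j) * (-1) ^ fg_norm2 (x k)"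
      by (rule sign_id) (use main_id red jk in blast)
    then show "(-1) ^ fg_norm2 (x j) * K j k * (-1) ^ fg_norm2 (x k) =
      (-1::real) ^ fg_norm2 (fg_mult (fg_inv (x j)) (x k)) * K j k" by simp
  qed
qed

lemma psd_pos_def:
  assumes "\<And>n (x :: nat \<Rightarrow> 'a fg). \<forall>i<n. fg_reduced (x i) \<Longrightarrow> psd n (\<lambda>j k. f (fg_norm2 (fg_mult (fg_inv (x j)) (x k))))"
  shows "fg_pos_def (\<lambda>g::'a fg. complex_of_real (f (fg_norm2 g)))"
  unfolding fg_pos_def_def
proof (intro allI impI)
  fix n and x :: "nat \<Rightarrow> 'a fg" and c :: "nat \<Rightarrow> complex"
  assume "\<forall>i<n. fg_reduced (x i)"
  then have "psd n (\<lambda>j k. f (fg_norm2 (fg_mult (fg_inv (x j)) (x k))))" by (rule assms)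
  then show "0 \<le> (\<Sum>j<n. \<Sum>k<n. c j * cnj (c k) * complex_of_real (f (fg_norm2 (fg_mult (fg_inv (x j)) (x k)))))"
    unfolding psd_def Q_def by blast
qed

lemma Q_left: "Q n (\<lambda>j k. a j) c = (\<Sum>j<n. c j * complex_of_real (a j)) * cnj (\<Sum>k<n. c k)"
  unfolding Q_def cnj_sum sum_product by (auto intro!: sum.cong simp: mult_ac)

lemma Q_right: "Q n (\<lambda>j k. a k) c = (\<Sum>j<n. c j) * cnj (\<Sum>k<n. c k * complex_of_real (a k))"
  unfolding Q_def cnj_sum sum_product by (auto intro!: sum.cong simp: mult_ac)

lemma cond_neg_part: "fg_cond_neg_def (\<lambda>g::'a fg. complex_of_real (real (fg_norm2 g)))"
  unfolding fg_cond_neg_def_def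
proof (intro conjI allI impI)
  fix g :: "'a fg"
  show "complex_of_real (real (fg_norm2 (fg_inv g))) = cnj (complex_of_real (real (fg_norm2 g)))"
    by (simp add: norm_inv)
next
  fix n and x :: "nat \<Rightarrow> 'a fg" and c :: "nat \<Rightarrow> complex"
  assume red: "\<forall>i<n. fg_reduced (x i)" and c0: "(\<Sum>j<n. c j) = 0"
  have "(\<Sum>j<n. \<Sum>k<n. c j * cnj (c k) * complex_of_real (real (fg_norm2 (fg_mult (fg_inv (x j)) (x k))))) =
    Q n (\<lambda>j k. real (fg_norm2 (fg_mult (fg_inv (x j)) (x k)))) c" unfolding Q_def by simp
  also have "\<dots> = Q n (\<lambda>j k. (\<lambda>j k. real (fg_norm2 (x j)) + real (fg_norm2 (x k))) j k + (-2) * (1 * of_int (ip (x j) (x k)))) c"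
  proof (rule Q_cong)
    fix j k assume jk: "j < n" "k < n"
    have "int (fg_norm2 (fg_mult (fg_inv (x j)) (x k))) = int (fg_norm2 (x j)) + int (fg_norm2 (x k)) - 2 * ip (x j) (x k)"
      using main_id red jk by blast
    then have "real_of_int (int (fg_norm2 (fg_mult (fg_inv (x j)) (x k)))) = real_of_int (int (fg_norm2 (x j)) + int (fg_norm2 (x k)) - 2 * ip (x j) (x k))"
      by simp
    then show "real (fg_norm2 (fg_mult (fg_inv (x j)) (x k))) = (\<lambda>j k. real (fg_norm2 (x j)) + real (fg_norm2 (x k))) j k + (-2) * (1 * of_int (ip (x j) (x k)))"
      by simp
  qed
  also have "\<dots> = Q n (\<lambda>j k. real (fg_norm2 (x j))) c + Q n (\<lambda>j k. real (fg_norm2 (x k))) c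
     + complex_of_real (-2) * Q n (\<lambda>j k. 1 * of_int (ip (x j) (x k))) c"
    by (simp only: Q_add Q_smult)
  also have "\<dots> = complex_of_real (-2) * Q n (\<lambda>j k. 1 * of_int (ip (x j) (x k))) c"
    by (simp add: Q_left Q_right c0)
  also have "\<dots> \<le> 0"
  proof -
    have "0 \<le> Q n (\<lambda>j k. 1 * of_int (ip (x j) (x k))) c"
      using psd_ip[OF psd_one] unfolding psd_def by blast
    then show ?thesis by (simp add: less_eq_complex_def)
  qed
  finally show "(\<Sum>j<n. \<Sum>k<n. c j * cnj (c k) * complex_of_real (real (fg_norm2 (fg_mult (fg_inv (x j)) (x k))))) \<le> 0" .
qed

lemma psd_pow_all:
  fixes s :: real
  assumes "-1 \<le> s" "s \<le> 1" "\<forall>i<n. fg_reduced (x i)"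
  shows "psd n (\<lambda>j k. s ^ fg_norm2 (fg_mult (fg_inv (x j)) (x k)))"
proof -
  consider "0 < s" | "s = 0" | "s < 0" by linarith
  then show ?thesis
  proof cases
    case 1 then show ?thesis using psd_gauss assms by blast
  next
    case 2 then show ?thesis using psd_zero assms by blast
  next
    case 3
    have "psd n (\<lambda>j k. (-s) ^ fg_norm2 (fg_mult (fg_inv (x j)) (x k)))"
      using psd_gauss[of "-s"] 3 assms by simp
    then have "psd n (\<lambda>j k. (-1::real) ^ fg_norm2 (fg_mult (fg_inv (x j)) (x k)) * (-s) ^ fg_norm2 (fg_mult (fg_inv (x j)) (x k)))"
      by (rule psd_sign[OF assms(3)])
    then show ?thesis by (simp add: power_mult_distrib[symmetric])
  qed
qed

theorem proposition4p2:
  fixes gen :: "'a::countable itself"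
  shows "fg_cond_neg_def (\<lambda>g::'a fg. complex_of_real (real (fg_norm2 g)))
    \<and> (\<forall>s::real. 0 \<le> s \<and> s \<le> 1 \<longrightarrow>
          fg_pos_def (\<lambda>g::'a fg. complex_of_real (s ^ fg_norm2 g)))
    \<and> fg_pos_def (\<lambda>g::'a fg. complex_of_real ((-1) ^ fg_norm2 g))
    \<and> (\<forall>s::real. -1 \<le> s \<and> s \<le> 1 \<longrightarrow>
          fg_pos_def (\<lambda>g::'a fg. complex_of_real (s ^ fg_norm2 g)))"
proof (intro conjI allI impI)
  show "fg_cond_neg_def (\<lambda>g::'a fg. complex_of_real (real (fg_norm2 g)))" by (rule cond_neg_part)
next
  fix s :: real assume "0 \<le> s \<and> s \<le> 1"
  then have "fg_pos_def (\<lambda>g::'a fg. complex_of_real ((\<lambda>N. s ^ N) (fg_norm2 g)))"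
    by (intro psd_pos_def psd_pow_all) auto
  then show "fg_pos_def (\<lambda>g::'a fg. complex_of_real (s ^ fg_norm2 g))" by (simp only:)
next
  have "fg_pos_def (\<lambda>g::'a fg. complex_of_real ((\<lambda>N. (-1::real) ^ N) (fg_norm2 g)))"
    by (intro psd_pos_def psd_pow_all) auto
  then show "fg_pos_def (\<lambda>g::'a fg. complex_of_real ((-1) ^ fg_norm2 g))" by (simp only:)
next
  fix s :: real assume "-1 \<le> s \<and> s \<le> 1"
  then have "fg_pos_def (\<lambda>g::'a fg. complex_of_real ((\<lambda>N. s ^ N) (fg_norm2 g)))"
    by (intro psd_pos_def psd_pow_all) auto
  then show "fg_pos_def (\<lambda>g::'a fg. complex_of_real (s ^ fg_norm2 g))" by (simp only:)
qed

end
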